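(* For $(w,x,y,z)$ define $$\tilde{\mathcal{J}}_1=\frac{(w^2+z^2)xy+\beta(wx+wz+yz)}{wxyz},$$ $$\tilde{\mathcal{J}}_2=\frac{w^2z^2+xz(w^2+x^2+y^2+xz)+wy(x^2+y^2+z^2+wy)+\beta(x^2+y^2+xz+wy)}{wxyz},$$ $$\tilde{\mathcal{J}}_3=\frac{(w+y)(x+z)(xz+yw+\beta)}{wxyz}.$$ Then for every $\beta\in\mathbb{Z}\setminus\{0,-1\}$ and every $(\lambda_1:\lambda_2:\lambda_3)\in\mathbb{P}^2$, the Diophantine equation $$\lambda_1\tilde{\mathcal{J}}_1+\lambda_2\tilde{\mathcal{J}}_2+\lambda_3\tilde{\mathcal{J}}_3=\lambda_1(3\beta+2)+\lambda_2(4\beta+9)+4\lambda_3(\beta+2)$$ has infinitely many integer solutions $(w,x,y,z)$. *)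

theory Defs
  imports Complex_Main
begin

text \<open>Division is field division; the statement only uses points with w x y z nonzero.\<close>

definition J1 :: "int \<Rightarrow> int \<Rightarrow> int \<Rightarrow> int \<Rightarrow> int \<Rightarrow> complex" where
  "J1 \<beta> w x y z =
     of_int ((w^2 + z^2) * x * y + \<beta> * (w*x + w*z + y*z)) / of_int (w*x*y*z)"

definition J2 :: "int \<Rightarrow> int \<Rightarrow> int \<Rightarrow> int \<Rightarrow> int \<Rightarrow> complex" where
  "J2 \<beta> w x y z =
     of_int (w^2 * z^2 + x*z*(w^2 + x^2 + y^2 + x*z) + w*y*(x^2 + y^2 + z^2 + w*y)
             + \<beta> * (x^2 + y^2 + x*z + w*y)) / of_int (w*x*y*z)"

definition J3 :: "int \<Rightarrow> int \<Rightarrow> int \<Rightarrow> int \<Rightarrow> int \<Rightarrow> complex" where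
  "J3 \<beta> w x y z =
     of_int ((w + y) * (x + z) * (x*z + y*w + \<beta>)) / of_int (w*x*y*z)"

end

theory Submission
  imports Defs
begin

lemma g1:
  fixes W X Y Z B V :: complex
  assumes "W \<noteq> 0" "X \<noteq> 0" "Y \<noteq> 0" "Z \<noteq> 0" "V \<noteq> 0" and r: "V*W = X*Z+B"
  shows "((X^2 + V^2) * Y * Z + B * (X*Y + X*V + Z*V)) / (X*Y*Z*V) = ((W^2 + Z^2) * X * Y + B * (W*X + W*Z + Y*Z)) / (W*X*Y*Z)"
  using assms apply (subst frac_eq_eq) apply simp_all using r by algebra

lemma g2:
  fixes W X Y Z B V :: complex
  assumes "W \<noteq> 0" "X \<noteq> 0" "Y \<noteq> 0" "Z \<noteq> 0" "V \<noteq> 0" and r: "V*W = X*Z+B"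
  shows "(X^2 * V^2 + Y*V*(X^2 + Y^2 + Z^2 + Y*V) + X*Z*(Y^2 + Z^2 + V^2 + X*Z)
             + B * (Y^2 + Z^2 + Y*V + X*Z)) / (X*Y*Z*V) = (W^2 * Z^2 + X*Z*(W^2 + X^2 + Y^2 + X*Z) + W*Y*(X^2 + Y^2 + Z^2 + W*Y)
             + B * (X^2 + Y^2 + X*Z + W*Y)) / (W*X*Y*Z)"
  using assms apply (subst frac_eq_eq) apply simp_all using r by algebra

lemma g3:
  fixes W X Y Z B V :: complex
  assumes "W \<noteq> 0" "X \<noteq> 0" "Y \<noteq> 0" "Z \<noteq> 0" "V \<noteq> 0" and r: "V*W = X*Z+B"
  shows "((X + Z) * (Y + V) * (Y*V + Z*X + B)) / (X*Y*Z*V) = ((W + Y) * (X + Z) * (X*Z + Y*W + B)) / (W*X*Y*Z)"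
  using assms apply (subst frac_eq_eq) apply simp_all using r by algebra

lemma inv_aux:
  fixes b w x y z v :: int
  assumes nz: "w \<noteq> 0" "x \<noteq> 0" "y \<noteq> 0" "z \<noteq> 0" "v \<noteq> 0"
    and r: "v * w = x * z + b"
  shows "J1 b x y z v = J1 b w x y z \<and> J2 b x y z v = J2 b w x y z \<and> J3 b x y z v = J3 b w x y z"
proof -
  have r': "(of_int v::complex) * of_int w = of_int x * of_int z + of_int b"
    using r by (metis of_int_add of_int_mult)
  have a: "(of_int w::complex) \<noteq> 0" "(of_int x::complex) \<noteq> 0" "(of_int y::complex) \<noteq> 0"
    "(of_int z::complex) \<noteq> 0" "(of_int v::complex) \<noteq> 0" using nz by simp_all
  show ?thesis
    unfolding J1_def J2_def J3_def
    using g1[OF a r'] g2[OF a r'] g3[OF a r'] by simp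
qed

fun sq :: "int \<Rightarrow> nat \<Rightarrow> int" where
  "sq b 0 = 1"
| "sq b (Suc 0) = 1"
| "sq b (Suc (Suc 0)) = 1"
| "sq b (Suc (Suc (Suc 0))) = 1"
| "sq b (Suc (Suc (Suc (Suc 0)))) = 1 + b"
| "sq b (Suc (Suc (Suc (Suc (Suc 0))))) = 1 + 2*b"
| "sq b (Suc (Suc (Suc (Suc (Suc (Suc n)))))) = (3*b+2) * sq b (Suc (Suc (Suc n))) - sq b n"

lemma sq_rec: "sq b (n+6) = (3*b+2) * sq b (n+3) - sq b n"
  by (simp add: numeral_eq_Suc)

lemma sq_rel: "sq b (n+4) * sq b n = sq b (n+1) * sq b (n+3) + b"
proof (induction n rule: less_induct)
  case (less n)
  show ?case
  proof (cases "n < 3")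
    case True
    then have "n = 0 \<or> n = 1 \<or> n = 2" by auto
    then show ?thesis by (auto simp: numeral_eq_Suc algebra_simps)
  next
    case False
    then obtain m where m: "n = m + 3" by (metis add.commute less_imp_add_positive not_less_iff_gr_or_eq add_diff_inverse_nat)
    have IH: "sq b (m+4) * sq b m = sq b (m+1) * sq b (m+3) + b" using less m by simp
    have e1: "sq b (n+4) = (3*b+2) * sq b (m+4) - sq b (m+1)"
    proof -
      have "sq b (m+1+6) = (3*b+2) * sq b (m+1+3) - sq b (m+1)" by (rule sq_rec)
      moreover have "m+1+6 = n+4" "m+1+3 = m+4" using m by arith+
      ultimately show ?thesis by metis
    qed
    have e2: "sq b (n+3) = (3*b+2) * sq b (m+3) - sq b m"
    proof -
      have "sq b (m+6) = (3*b+2) * sq b (m+3) - sq b m" by (rule sq_rec)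
      moreover have "m+6 = n+3" using m by arith
      ultimately show ?thesis by metis
    qed
    have "n+1 = m+4" using m by arith
    then have e3: "sq b (n+1) = sq b (m+4)" "sq b n = sq b (m+3)" using m by metis+
    show ?thesis unfolding e1 e2 e3 using IH by (simp add: algebra_simps)
  qed
qed

lemma sq_growth:
  fixes b :: int
  assumes "b \<noteq> 0" "b \<noteq> -1"
  shows "\<bar>sq b (n+5)\<bar> > \<bar>sq b (n+2)\<bar>"
proof (induction n rule: less_induct)
  case (less n)
  show ?case
  proof (cases "n < 3")
    case True
    then have "n = 0 \<or> n = 1 \<or> n = 2" by auto
    moreover have "\<bar>1 + 2*b\<bar> > 1" using assms by auto
    moreover have "\<bar>1 + 3*b\<bar> > 1" using assms by auto
    moreover have "\<bar>(3*b+2)*(1+b) - 1\<bar> > \<bar>1 + b\<bar>"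
    proof (cases "b \<ge> 1")
      case True
      then have "(3*b+2)*(1+b) \<ge> 5*(1+b)" by (intro mult_right_mono) auto
      then have p: "(3*b+2)*(1+b) \<ge> 5*(1+b)" .
      have b1: "b \<ge> 1" using True .
      show ?thesis using p b1 by (smt (verit))
    next
      case False
      then have bl: "b \<le> -2" using assms by auto
      then have "(3*b+2)*(1+b) = (-(3*b+2))*(-(1+b))" by (simp only: minus_mult_minus)
      also have "\<dots> \<ge> 4*(-(1+b))" using bl by (intro mult_right_mono) auto
      finally have p: "(3*b+2)*(1+b) \<ge> 4*(-(1+b))" .
      show ?thesis using p bl by (smt (verit))
    qed
    ultimately show ?thesis by (auto simp: numeral_eq_Suc)
  next
    case False
    then obtain m where m: "n = m + 3" by (metis add.commute less_imp_add_positive not_less_iff_gr_or_eq add_diff_inverse_nat)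
    have IH: "\<bar>sq b (m+5)\<bar> > \<bar>sq b (m+2)\<bar>" using less m by simp
    have e: "sq b (n+5) = (3*b+2) * sq b (m+5) - sq b (m+2)"
    proof -
      have "sq b (m+2+6) = (3*b+2) * sq b (m+2+3) - sq b (m+2)" by (rule sq_rec)
      moreover have "m+2+6 = n+5" "m+2+3 = m+5" using m by arith+
      ultimately show ?thesis by metis
    qed
    have K: "\<bar>3*b+2\<bar> \<ge> 3" using assms by auto
    have "\<bar>(3*b+2) * sq b (m+5)\<bar> \<ge> 3 * \<bar>sq b (m+5)\<bar>"
      unfolding abs_mult using K by (intro mult_right_mono) auto
    moreover have "n+2 = m+5" using m by arith
    ultimately show ?thesis unfolding e using IH by (smt (verit))
  qed
qed

lemma sq_nz:
  fixes b :: int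
  assumes "b \<noteq> 0" "b \<noteq> -1"
  shows "sq b n \<noteq> 0"
proof (cases "n < 5")
  case True
  then have "n = 0 \<or> n = 1 \<or> n = 2 \<or> n = 3 \<or> n = 4" by auto
  then show ?thesis using assms by (auto simp: numeral_eq_Suc)
next
  case False
  then obtain m where m: "n = m + 5" by (metis add.commute less_imp_add_positive not_less_iff_gr_or_eq add_diff_inverse_nat)
  show ?thesis using sq_growth[OF assms, of m] m by auto
qed

definition T :: "int \<Rightarrow> nat \<Rightarrow> int \<times> int \<times> int \<times> int" where
  "T b n = (sq b n, sq b (n+1), sq b (n+2), sq b (n+3))"

lemma T_sol:
  fixes b :: int
  assumes "b \<noteq> 0" "b \<noteq> -1"
  shows "J1 b (sq b n) (sq b (n+1)) (sq b (n+2)) (sq b (n+3)) = of_int (3*b+2) \<and>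
         J2 b (sq b n) (sq b (n+1)) (sq b (n+2)) (sq b (n+3)) = of_int (4*b+9) \<and>
         J3 b (sq b n) (sq b (n+1)) (sq b (n+2)) (sq b (n+3)) = of_int (4*(b+2))"
proof (induction n)
  case 0
  show ?case by (simp add: J1_def J2_def J3_def numeral_eq_Suc algebra_simps)
next
  case (Suc n)
  have r: "sq b (n+4) * sq b n = sq b (n+1) * sq b (n+3) + b" by (rule sq_rel)
  have "J1 b (sq b (n+1)) (sq b (n+2)) (sq b (n+3)) (sq b (n+4)) = J1 b (sq b n) (sq b (n+1)) (sq b (n+2)) (sq b (n+3)) \<and>
        J2 b (sq b (n+1)) (sq b (n+2)) (sq b (n+3)) (sq b (n+4)) = J2 b (sq b n) (sq b (n+1)) (sq b (n+2)) (sq b (n+3)) \<and>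
        J3 b (sq b (n+1)) (sq b (n+2)) (sq b (n+3)) (sq b (n+4)) = J3 b (sq b n) (sq b (n+1)) (sq b (n+2)) (sq b (n+3))"
    by (rule inv_aux) (use sq_nz[OF assms] r in auto)
  moreover have "Suc n + 1 = n + 2" "Suc n + 2 = n + 3" "Suc n + 3 = n + 4" "Suc n = n + 1" by simp_all
  ultimately show ?case using Suc by metis
qed

theorem corollary3p10:
  fixes \<beta> :: int and l1 l2 l3 :: complex
  assumes "\<beta> \<noteq> 0" and "\<beta> \<noteq> -1"
    and "(l1, l2, l3) \<noteq> (0, 0, 0)"
  shows "infinite {(w::int, x::int, y::int, z::int).
            w * x * y * z \<noteq> 0 \<and>
            l1 * J1 \<beta> w x y z + l2 * J2 \<beta> w x y z + l3 * J3 \<beta> w x y z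
              = l1 * of_int (3*\<beta> + 2) + l2 * of_int (4*\<beta> + 9) + 4 * l3 * of_int (\<beta> + 2)}"
  (is "infinite ?S")
proof -
  let ?f = "\<lambda>m. T \<beta> (3*m+2)"
  have sm: "strict_mono (\<lambda>m. \<bar>sq \<beta> (3*m+2)\<bar>)"
    unfolding strict_mono_Suc_iff
  proof
    fix m
    show "\<bar>sq \<beta> (3*m+2)\<bar> < \<bar>sq \<beta> (3*Suc m+2)\<bar>"
      using sq_growth[OF assms(1,2), of "3*m"] by (simp add: add.commute)
  qed
  have "inj ?f"
  proof (rule injI)
    fix m n assume "?f m = ?f n"
    then have "\<bar>sq \<beta> (3*m+2)\<bar> = \<bar>sq \<beta> (3*n+2)\<bar>" by (simp add: T_def)
    then show "m = n" using strict_mono_eq[OF sm] by blast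
  qed
  moreover have "range ?f \<subseteq> ?S"
  proof
    fix t assume "t \<in> range ?f"
    then obtain m where t: "t = T \<beta> (3*m+2)" by auto
    have "of_int (4*(\<beta>+2)) = (4::complex) * of_int (\<beta>+2)" by simp
    then show "t \<in> ?S" unfolding t T_def using T_sol[OF assms(1,2), of "3*m+2"] sq_nz[OF assms(1,2)]
      by (simp add: algebra_simps)
  qed
  ultimately show ?thesis
  proof (intro notI)
    assume i: "inj ?f" and sub: "range ?f \<subseteq> ?S" and f: "finite ?S"
    have "finite (range ?f)" using finite_subset[OF sub f] .
    then have "finite (UNIV::nat set)" using finite_imageD i by blast
    then show False by simp
  qed
qed

end
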